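(* Let $\sigma>0$, $A>0$, $\alpha>A\sigma$, and let $f_1,f_2:\mathbb{R}\to\mathbb{R}$ each be continuous, bandlimited to $\sigma$ rad/s, with $|f_j(t)|\le A/(1+t^2)$ for all $t$. For $j=1,2$ let $g_j(t)=\alpha t+f_j(t)$ and $h_j(u)=g_j^{-1}(u)-u/\alpha$. Then $$\|h_1-h_2\|_1=\|f_1-f_2\|_1 .$$
   Context: Fourier transform convention: $\hat f(\xi)=\int_{\mathbb{R}}f(t)e^{-i2\pi\xi t}\,dt$; $f$ is bandlimited to $\sigma$ rad/s if $\hat f(\xi)=0$ for $|\xi|>\sigma/(2\pi)$. $\|\cdot\|_1$ is the $L^1(\mathbb{R})$ norm. *)

theory Defs
  imports "HOL-Analysis.Analysis"
begin

definition fourier_transform :: "(real \<Rightarrow> real) \<Rightarrow> real \<Rightarrow> complex" where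
  "fourier_transform f \<xi> =
     (LINT t|lborel. complex_of_real (f t) * cis (- 2 * pi * \<xi> * t))"

definition bandlimited :: "real \<Rightarrow> (real \<Rightarrow> real) \<Rightarrow> bool" where
  "bandlimited \<sigma> f \<longleftrightarrow> (\<forall>\<xi>. \<bar>\<xi>\<bar> > \<sigma> / (2 * pi) \<longrightarrow> fourier_transform f \<xi> = 0)"

definition L1_norm :: "(real \<Rightarrow> real) \<Rightarrow> ennreal" where
  "L1_norm f = (\<integral>\<^sup>+ t. ennreal \<bar>f t\<bar> \<partial>lborel)"

end

theory Submission
  imports Defs "HOL-Probability.Levy"
begin


lemma inner_Ico:
  "(\<integral>\<^sup>+u. indicator {a..<b} u \<partial>lborel) = ennreal (max 0 (b - a))"
  by (cases "a \<le> b") (auto simp: max_def)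

lemma area_half:
  fixes g1 g2 :: "real \<Rightarrow> real"
  assumes m1: "strict_mono g1" and m2: "strict_mono g2"
    and c1: "continuous_on UNIV g1" and c2: "continuous_on UNIV g2"
    and s1: "surj g1" and s2: "surj g2"
  shows "(\<integral>\<^sup>+t. ennreal (max 0 (g2 t - g1 t)) \<partial>lborel)
       = (\<integral>\<^sup>+u. ennreal (max 0 (inv g1 u - inv g2 u)) \<partial>lborel)"
proof -
  have gi1: "g1 (inv g1 u) = u" for u using s1 by (simp add: surj_f_inv_f)
  have gi2: "g2 (inv g2 u) = u" for u using s2 by (simp add: surj_f_inv_f)
  have e1: "g1 t \<le> u \<longleftrightarrow> t \<le> inv g1 u" for t u
    using strict_mono_less_eq[OF m1, of t "inv g1 u"] gi1 by simp
  have e2: "u < g2 t \<longleftrightarrow> inv g2 u < t" for t u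
    using strict_mono_less[OF m2, of "inv g2 u" t] gi2 by simp
  have [measurable]: "g1 \<in> borel_measurable borel" "g2 \<in> borel_measurable borel"
    using c1 c2 by (auto intro: borel_measurable_continuous_onI)
  define S where "S = {p::real\<times>real. g1 (fst p) \<le> snd p \<and> snd p < g2 (fst p)}"
  have pm: "Measurable.pred (lborel \<Otimes>\<^sub>M lborel) (\<lambda>p::real\<times>real. g1 (fst p) \<le> snd p \<and> snd p < g2 (fst p))"
    by measurable
  have Sm: "S \<in> sets (lborel \<Otimes>\<^sub>M lborel)"
    using pm unfolding S_def pred_def by (simp add: space_pair_measure)
  have "(\<integral>\<^sup>+t. ennreal (max 0 (g2 t - g1 t)) \<partial>lborel)
      = (\<integral>\<^sup>+t. (\<integral>\<^sup>+u. indicator S (t,u) \<partial>lborel) \<partial>lborel)"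
  proof (intro nn_integral_cong)
    fix t
    have "(\<lambda>u. indicator S (t,u) :: ennreal) = indicator {g1 t..<g2 t}"
      by (auto simp: S_def indicator_def)
    then show "ennreal (max 0 (g2 t - g1 t)) = (\<integral>\<^sup>+u. indicator S (t,u) \<partial>lborel)"
      by (simp add: inner_Ico)
  qed
  also have "\<dots> = (\<integral>\<^sup>+u. (\<integral>\<^sup>+t. indicator S (t,u) \<partial>lborel) \<partial>lborel)"
    by (rule lborel_pair.Fubini'[symmetric]) (use Sm in simp)
  also have "\<dots> = (\<integral>\<^sup>+u. ennreal (max 0 (inv g1 u - inv g2 u)) \<partial>lborel)"
  proof (intro nn_integral_cong)
    fix u
    have "(\<lambda>t. indicator S (t,u) :: ennreal) = indicator {inv g2 u<..inv g1 u}"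
      by (auto simp: S_def indicator_def e1 e2)
    then show "(\<integral>\<^sup>+t. indicator S (t,u) \<partial>lborel) = ennreal (max 0 (inv g1 u - inv g2 u))"
      by (cases "inv g2 u \<le> inv g1 u") (auto simp: max_def)
  qed
  finally show ?thesis .
qed

lemma area:
  fixes g1 g2 :: "real \<Rightarrow> real"
  assumes m1: "strict_mono g1" and m2: "strict_mono g2"
    and c1: "continuous_on UNIV g1" and c2: "continuous_on UNIV g2"
    and s1: "surj g1" and s2: "surj g2"
  shows "(\<integral>\<^sup>+u. ennreal \<bar>inv g1 u - inv g2 u\<bar> \<partial>lborel)
       = (\<integral>\<^sup>+t. ennreal \<bar>g1 t - g2 t\<bar> \<partial>lborel)"
proof -
  have [measurable]: "g1 \<in> borel_measurable borel" "g2 \<in> borel_measurable borel"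
    using c1 c2 by (auto intro: borel_measurable_continuous_onI)
  have ab: "ennreal \<bar>a - b\<bar> = ennreal (max 0 (a - b)) + ennreal (max 0 (b - a))" for a b :: real
    by (cases "a \<le> b") (auto simp: max_def)
  have "(\<integral>\<^sup>+t. ennreal \<bar>g1 t - g2 t\<bar> \<partial>lborel)
     = (\<integral>\<^sup>+t. ennreal (max 0 (g2 t - g1 t)) \<partial>lborel) + (\<integral>\<^sup>+t. ennreal (max 0 (g1 t - g2 t)) \<partial>lborel)"
    by (subst ab) (subst nn_integral_add; simp add: add.commute)
  also have "\<dots> = (\<integral>\<^sup>+u. ennreal (max 0 (inv g1 u - inv g2 u)) \<partial>lborel) + (\<integral>\<^sup>+u. ennreal (max 0 (inv g2 u - inv g1 u)) \<partial>lborel)"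
    using area_half[OF m1 m2 c1 c2 s1 s2] area_half[OF m2 m1 c2 c1 s2 s1] by simp
  also have "\<dots> = (\<integral>\<^sup>+u. ennreal \<bar>inv g1 u - inv g2 u\<bar> \<partial>lborel)"
  proof -
    have [measurable]: "inv g1 \<in> borel_measurable borel" "inv g2 \<in> borel_measurable borel"
    proof -
      have "strict_mono (inv g1)" "strict_mono (inv g2)"
        using strict_mono_inv[OF m1 s1, of "inv g1"] strict_mono_inv[OF m2 s2, of "inv g2"]
          strict_mono_imp_inj_on[OF m1] strict_mono_imp_inj_on[OF m2] by (auto simp: inv_f_f)
      then show "inv g1 \<in> borel_measurable borel" "inv g2 \<in> borel_measurable borel"
        by (auto intro!: borel_measurable_mono strict_mono_mono)
    qed
    show ?thesis by (subst ab) (subst nn_integral_add; simp)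
  qed
  finally show ?thesis by simp
qed


lemma deriv_bound_interval:
  fixes f f' :: "real \<Rightarrow> real"
  assumes "a \<le> b" and der: "\<And>x. a \<le> x \<Longrightarrow> x \<le> b \<Longrightarrow> DERIV f x :> f' x"
    and bnd: "\<And>x. a \<le> x \<Longrightarrow> x \<le> b \<Longrightarrow> \<bar>f' x\<bar> \<le> B"
  shows "\<bar>f b - f a\<bar> \<le> B * (b - a)"
proof (cases "a = b")
  case True then show ?thesis using bnd[of a] by simp
next
  case False
  with assms(1) have "a < b" by simp
  from MVT2[OF this der] obtain z where z: "a < z" "z < b" "f b - f a = (b - a) * f' z" by blast
  have "\<bar>f b - f a\<bar> = (b - a) * \<bar>f' z\<bar>" using z \<open>a < b\<close> by (simp add: abs_mult)
  also have "\<dots> \<le> (b - a) * B" using bnd[of z] z \<open>a < b\<close> by (intro mult_left_mono) auto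
  finally show ?thesis by (simp add: mult.commute)
qed

lemma trig_closed:
  fixes y :: real
  shows "2 * cos y * (\<Sum>k<N. (-1)^k * sin ((2 * real k + 1) * y)) = - ((-1)^N * sin (2 * real N * y))"
proof (induction N)
  case 0 then show ?case by simp
next
  case (Suc N)
  have e: "2 * cos y * sin ((2 * real N + 1) * y) = sin (2 * real (Suc N) * y) + sin (2 * real N * y)"
  proof -
    have g: "2 * cos y * sin a = sin (a + y) + sin (a - y)" for a
      by (simp add: sin_add sin_diff)
    have "sin (2 * real (Suc N) * y) = sin ((2 * real N + 1) * y + y)" by (simp add: algebra_simps)
    moreover have "sin (2 * real N * y) = sin ((2 * real N + 1) * y - y)" by (simp add: algebra_simps)
    ultimately show ?thesis by (simp only: g)
  qed
  have "2 * cos y * (\<Sum>k<Suc N. (-1)^k * sin ((2 * real k + 1) * y))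
      = 2 * cos y * (\<Sum>k<N. (-1)^k * sin ((2 * real k + 1) * y)) + (-1)^N * (2 * cos y * sin ((2 * real N + 1) * y))"
    by (simp add: algebra_simps)
  also have "\<dots> = - ((-1)^Suc N * sin (2 * real (Suc N) * y))"
    unfolding Suc e by (simp add: algebra_simps)
  finally show ?case .
qed

lemma deriv_bound_0:
  fixes f f' :: "real \<Rightarrow> real"
  assumes y: "\<bar>y\<bar> \<le> c" and der: "\<And>x. \<bar>x\<bar> \<le> c \<Longrightarrow> DERIV f x :> f' x"
    and bnd: "\<And>x. \<bar>x\<bar> \<le> c \<Longrightarrow> \<bar>f' x\<bar> \<le> B"
  shows "\<bar>f y - f 0\<bar> \<le> B * \<bar>y\<bar>"
proof (cases "0 \<le> y")
  case True
  have "\<bar>f y - f 0\<bar> \<le> B * (y - 0)"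
    by (rule deriv_bound_interval[OF True]) (use y in \<open>auto intro!: der bnd\<close>)
  then show ?thesis using True by simp
next
  case False
  have "\<bar>f 0 - f y\<bar> \<le> B * (0 - y)"
    by (rule deriv_bound_interval) (use y False in \<open>auto intro!: der bnd\<close>)
  then show ?thesis using False by (simp add: abs_minus_commute)
qed

lemma cos_ge_on:
  assumes "0 \<le> c" "c < pi/2" "\<bar>y\<bar> \<le> c"
  shows "cos c \<le> cos y" "0 < cos c"
proof -
  show "cos c \<le> cos y"
    using cos_monotone_0_pi_le[of "\<bar>y\<bar>" c] assms by simp
  show "0 < cos c" using cos_gt_zero_pi[of c] assms by simp
qed

lemma tri_partial_bound:
  assumes c: "0 \<le> c" "c < pi/2" and N: "N \<ge> 1" and x: "\<bar>x\<bar> \<le> c"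
  shows "\<bar>(\<Sum>k<N. (-1)^k * sin ((2 * real k + 1) * x) / (2 * real k + 1)^2)
          - x * (\<Sum>k<N. (-1)^k / (2 * real k + 1))\<bar>
         \<le> ((c + 2) / (4 * real N * (cos c)^2)) * \<bar>x\<bar>"
proof -
  define S where "S y = (\<Sum>k<N. (-1)^k * sin ((2 * real k + 1) * y) / (2 * real k + 1)^2)" for y
  define C where "C y = (\<Sum>k<N. (-1)^k * cos ((2 * real k + 1) * y) / (2 * real k + 1))" for y
  define W where "W y = (\<Sum>k<N. (-1)^k * sin ((2 * real k + 1) * y))" for y
  define L where "L = (\<Sum>k<N. (-1)^k / (2 * real k + 1) :: real)"
  define G where "G y = (- ((-1)^N / (4 * real N))) * (cos (2 * real N * y) / cos y)" for y
  define G' where "G' y = (-1)^N * sin (2 * real N * y) / (2 * cos y)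
       - (-1)^N * cos (2 * real N * y) * sin y / (4 * real N * (cos y)^2)" for y
  have cc: "0 < cos c" using cos_ge_on[OF c, of 0] c by simp
  have cy: "cos c \<le> cos y" "0 < cos y" if "\<bar>y\<bar> \<le> c" for y
    using cos_ge_on[OF c that] by auto
  have Npos: "0 < real N" using N by simp
  have dS: "DERIV S y :> C y" for y
  proof -
    have "DERIV (\<lambda>y. (-1)^k * sin ((2 * real k + 1) * y) / (2 * real k + 1)^2) y
       :> (-1)^k * cos ((2 * real k + 1) * y) / (2 * real k + 1)" for k
    proof -
      have "(2 * real k + 1) \<noteq> 0" by (simp add: add_pos_nonneg)
      then show ?thesis
        by (auto intro!: derivative_eq_intros simp: power2_eq_square)
    qed
    then show ?thesis unfolding S_def C_def by (intro DERIV_sum)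
  qed
  have dC: "DERIV C y :> - W y" for y
  proof -
    have "DERIV (\<lambda>y. (-1)^k * cos ((2 * real k + 1) * y) / (2 * real k + 1)) y
       :> - ((-1)^k * sin ((2 * real k + 1) * y))" for k
    proof -
      have "(2 * real k + 1) \<noteq> 0" by (simp add: add_pos_nonneg)
      then show ?thesis
        by (auto intro!: derivative_eq_intros)
    qed
    then have "DERIV C y :> (\<Sum>k<N. - ((-1)^k * sin ((2 * real k + 1) * y)))"
      unfolding C_def by (intro DERIV_sum)
    then show ?thesis unfolding W_def by (simp add: sum_negf)
  qed
  have W: "W y = - ((-1)^N * sin (2 * real N * y)) / (2 * cos y)" if "\<bar>y\<bar> \<le> c" for y
    using trig_closed[of y N] cy[OF that] unfolding W_def by (simp add: field_simps)
  have dG: "DERIV G y :> G' y" if "\<bar>y\<bar> \<le> c" for y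
  proof -
    have "cos y \<noteq> 0" using cy[OF that] by simp
    have d1: "DERIV (\<lambda>y. cos (2 * real N * y)) y :> - sin (2 * real N * y) * (2 * real N)"
      by (auto intro!: derivative_eq_intros)
    have "DERIV G y :> (- ((-1)^N / (4 * real N))) *
        ((- sin (2 * real N * y) * (2 * real N) * cos y - cos (2 * real N * y) * (- sin y)) / (cos y * cos y))"
      unfolding G_def by (intro DERIV_cmult DERIV_divide d1 DERIV_cos \<open>cos y \<noteq> 0\<close>)
    then show ?thesis
      by (rule DERIV_cong) (use \<open>cos y \<noteq> 0\<close> Npos in \<open>simp add: G'_def power2_eq_square field_simps\<close>)
  qed
  have bd: "\<bar>- W y - G' y\<bar> \<le> 1 / (4 * real N * (cos c)^2)" if "\<bar>y\<bar> \<le> c" for y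
  proof -
    have e: "- W y - G' y = (-1)^N * cos (2 * real N * y) * sin y / (4 * real N * (cos y)^2)"
      unfolding W[OF that] G'_def by simp
    have "\<bar>(-1)^N * cos (2 * real N * y) * sin y\<bar> \<le> 1"
      by (simp add: abs_mult abs_cos_le_one abs_sin_le_one mult_le_one)
    moreover have "4 * real N * (cos c)^2 \<le> 4 * real N * (cos y)^2"
      using cy[OF that] cc Npos by (intro mult_left_mono power_mono) auto
    moreover have "0 < 4 * real N * (cos c)^2" using cc Npos by simp
    ultimately show ?thesis unfolding e abs_divide
      by (smt (verit) abs_of_nonneg divide_le_eq_1_pos frac_le zero_le_power2 mult_nonneg_nonneg)
  qed
  have Gb: "\<bar>G y\<bar> \<le> 1 / (4 * real N * (cos c)^2)" if "\<bar>y\<bar> \<le> c" for y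
  proof -
    have "\<bar>G y\<bar> = \<bar>cos (2 * real N * y)\<bar> / (4 * real N * cos y)"
      using cy[OF that] Npos by (simp add: G_def abs_mult abs_divide)
    also have "\<dots> \<le> 1 / (4 * real N * cos y)"
      using cy[OF that] Npos by (intro divide_right_mono) (auto simp: abs_cos_le_one)
    also have "\<dots> \<le> 1 / (4 * real N * (cos c)^2)"
    proof -
      have "(cos c)^2 \<le> cos c" using cc cos_le_one[of c] by (simp add: power2_eq_square mult_le_cancel_left1)
      also have "\<dots> \<le> cos y" using cy[OF that] by simp
      finally have h: "(cos c)^2 \<le> cos y" .
      have "0 < 4 * real N * (cos c)^2" using cc Npos by simp
      moreover have "4 * real N * (cos c)^2 \<le> 4 * real N * cos y" using h Npos by simp
      ultimately show ?thesis by (intro frac_le) auto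
    qed
    finally show ?thesis .
  qed
  have V: "\<bar>C y - L\<bar> \<le> (c + 2) / (4 * real N * (cos c)^2)" if "\<bar>y\<bar> \<le> c" for y
  proof -
    have C0: "C 0 = L" by (simp add: C_def L_def)
    have "\<bar>(C y - G y) - (C 0 - G 0)\<bar> \<le> 1 / (4 * real N * (cos c)^2) * \<bar>y\<bar>"
      by (rule deriv_bound_0[OF that, where f' = "\<lambda>y. - W y - G' y"])
         (auto intro!: derivative_eq_intros dC dG bd)
    moreover have "\<bar>y\<bar> \<le> c" by fact
    ultimately have "\<bar>(C y - G y) - (C 0 - G 0)\<bar> \<le> 1 / (4 * real N * (cos c)^2) * c"
      using cc Npos by (smt (verit) mult_left_mono divide_nonneg_nonneg zero_le_power2 mult_nonneg_nonneg of_nat_0_le_iff)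
    moreover have "\<bar>G y\<bar> \<le> 1 / (4 * real N * (cos c)^2)" "\<bar>G 0\<bar> \<le> 1 / (4 * real N * (cos c)^2)"
      using Gb[OF that] Gb[of 0] c by auto
    ultimately have "\<bar>C y - L\<bar> \<le> 1 / (4 * real N * (cos c)^2) * c + 2 * (1 / (4 * real N * (cos c)^2))"
      unfolding C0 by linarith
    moreover have "1 / (4 * real N * (cos c)^2) * c + 2 * (1 / (4 * real N * (cos c)^2))
       = (c + 2) / (4 * real N * (cos c)^2)" by (simp add: add_divide_distrib)
    ultimately show ?thesis by simp
  qed
  have "\<bar>(S x - x * L) - (S 0 - 0 * L)\<bar> \<le> ((c + 2) / (4 * real N * (cos c)^2)) * \<bar>x\<bar>"
    by (rule deriv_bound_0[OF x, where f' = "\<lambda>y. C y - L"])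
       (auto intro!: derivative_eq_intros dS V)
  then show ?thesis by (simp add: S_def L_def)
qed

lemma leibniz_pi_sums: "(\<lambda>k. (-1)^k / (2 * real k + 1)) sums (pi / 4)"
proof -
  have a0: "(\<lambda>k. 1 / (2 * real k + 1)) \<longlonglongrightarrow> 0"
  proof (rule Lim_null_comparison[OF _ lim_1_over_n])
    show "\<forall>\<^sub>F k in sequentially. norm (1 / (2 * real k + 1)) \<le> 1 / real k"
      by (intro eventually_sequentiallyI[of 1]) (auto simp: field_simps)
  qed
  have mono: "monoseq (\<lambda>k. 1 / (2 * real k + 1))"
    by (rule decseq_imp_monoseq) (auto simp: decseq_def intro!: divide_left_mono)
  have "summable (\<lambda>k. (-1)^k * (1 / (2 * real k + 1)))"
    by (rule summable_Leibniz(1)[OF a0 mono])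
  then have sm: "summable (\<lambda>k. (-1)^k / (2 * real k + 1))" by simp
  have "pi / 4 = (\<Sum>k. (-1)^k / (2 * real k + 1))"
    using pi_series by (simp add: mult.commute add.commute)
  then show ?thesis using sm by (simp add: sums_iff)
qed

lemma triangle_sums:
  assumes x: "\<bar>x\<bar> < pi / 2"
  shows "(\<lambda>k. (-1)^k * sin ((2 * real k + 1) * x) / (2 * real k + 1)^2) sums (pi / 4 * x)"
  unfolding sums_def
proof -
  define c where "c = \<bar>x\<bar>"
  have c: "0 \<le> c" "c < pi/2" "\<bar>x\<bar> \<le> c" using x by (auto simp: c_def)
  define E where "E N = (\<Sum>k<N. (-1)^k * sin ((2 * real k + 1) * x) / (2 * real k + 1)^2)
          - x * (\<Sum>k<N. (-1)^k / (2 * real k + 1))" for N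
  have L: "(\<lambda>N. \<Sum>k<N. (-1)^k / (2 * real k + 1)) \<longlonglongrightarrow> pi / 4"
    using leibniz_pi_sums by (simp add: sums_def)
  have Eb: "\<bar>E N\<bar> \<le> ((c + 2) / (4 * (cos c)^2) * \<bar>x\<bar>) * (1 / real N)" if "N \<ge> 1" for N
    using tri_partial_bound[OF c(1,2) that c(3)] unfolding E_def by (simp add: field_simps)
  have "(\<lambda>N. ((c + 2) / (4 * (cos c)^2) * \<bar>x\<bar>) * (1 / real N)) \<longlonglongrightarrow> 0"
    by (intro tendsto_mult_right_zero lim_1_over_n)
  then have E0: "E \<longlonglongrightarrow> 0"
    by (rule Lim_null_comparison[rotated])
       (use Eb in \<open>auto intro!: eventually_sequentiallyI[of 1]\<close>)
  have "(\<lambda>N. E N + x * (\<Sum>k<N. (-1)^k / (2 * real k + 1))) \<longlonglongrightarrow> 0 + x * (pi / 4)"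
    by (intro tendsto_intros E0 L)
  then show "(\<lambda>N. \<Sum>k<N. (-1)^k * sin ((2 * real k + 1) * x) / (2 * real k + 1)^2) \<longlonglongrightarrow> pi / 4 * x"
    by (simp add: E_def mult.commute)
qed

lemma odd_squares_sums: "(\<lambda>k. 1 / (2 * real k + 1)^2) sums (pi^2 / 8)"
proof -
  have B: "(\<lambda>n. 1 / (real n + 1)^2) sums (pi^2 / 6)"
    using inverse_squares_sums by (simp add: add.commute)
  have sm: "summable (\<lambda>n. 1 / (real n + 1)^2)" using B by (simp add: sums_iff)
  have ev: "(\<lambda>k. 1 / (2 * real k + 2)^2) sums (pi^2 / 24)"
  proof -
    have "(\<lambda>k. (1/4) * (1 / (real k + 1)^2)) sums ((1/4) * (pi^2 / 6))"
      by (intro sums_mult B)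
    moreover have "(\<lambda>k. (1/4) * (1 / (real k + 1)^2)) = (\<lambda>k. 1 / (2 * real k + 2)^2)"
      by (auto simp: fun_eq_iff power2_eq_square field_simps)
    ultimately show ?thesis by simp
  qed
  have "(\<lambda>n. 1 / (real n + 1)^2) sums (pi^2 / 6)" by (rule B)
  then have "(\<lambda>k. sum (\<lambda>n. 1 / (real n + 1)^2) {k * 2 ..< k * 2 + 2}) sums (pi^2/6)"
    by (rule sums_group) simp
  moreover have "sum (\<lambda>n. 1 / (real n + 1)^2) {k * 2 ..< k * 2 + 2} = 1 / (2 * real k + 1)^2 + 1 / (2 * real k + 2)^2" for k
  proof -
    have "{k * 2 ..< k * 2 + 2} = {k*2, k*2+1}" by auto
    then show ?thesis by (simp add: algebra_simps)
  qed
  ultimately have "(\<lambda>k. 1 / (2 * real k + 1)^2 + 1 / (2 * real k + 2)^2) sums (pi^2/6)"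
    by simp
  from sums_diff[OF this ev] show ?thesis by simp
qed



lemma density_prob:
  fixes p :: "real \<Rightarrow> real"
  assumes [measurable]: "integrable lborel p" and p0: "\<And>x. 0 \<le> p x" and c: "(LINT x|lborel. p x) = c" "0 < c"
  shows "real_distribution (density lborel (\<lambda>x. ennreal (p x / c)))"
proof -
  have "(\<integral>\<^sup>+x. ennreal (p x / c) \<partial>lborel) = ennreal (LINT x|lborel. p x / c)"
    using c p0 assms(1) by (intro nn_integral_eq_integral) (auto intro!: integrable_divide)
  also have "\<dots> = 1" using c by simp
  finally have "emeasure (density lborel (\<lambda>x. ennreal (p x / c))) UNIV = 1"
    by (simp add: emeasure_density)
  then have "prob_space (density lborel (\<lambda>x. ennreal (p x / c)))"
    by (intro prob_spaceI) simp
  then show ?thesis unfolding real_distribution_def real_distribution_axioms_def by simp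
qed

lemma char_density:
  fixes p :: "real \<Rightarrow> real"
  assumes [measurable]: "integrable lborel p" and p0: "\<And>x. 0 \<le> p x" and c: "0 < c"
  shows "char (density lborel (\<lambda>x. ennreal (p x / c))) t
       = (LINT x|lborel. complex_of_real (p x) * iexp (t * x)) / c"
proof -
  have "char (density lborel (\<lambda>x. ennreal (p x / c))) t
      = (LINT x|lborel. (p x / c) *\<^sub>R iexp (t * x))"
    unfolding char_def
    by (subst integral_density) (use p0 c in auto)
  also have "\<dots> = (LINT x|lborel. complex_of_real (p x) * iexp (t * x) / c)"
    by (intro Bochner_Integration.integral_cong) (auto simp: scaleR_conv_of_real)
  also have "\<dots> = (LINT x|lborel. complex_of_real (p x) * iexp (t * x)) / c"
    by (rule integral_divide_zero)
  finally show ?thesis .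
qed

lemma ft_uniqueness:
  fixes u :: "real \<Rightarrow> real"
  assumes u[measurable]: "integrable lborel u"
    and ft: "\<And>\<xi>. (LINT t|lborel. complex_of_real (u t) * cis (- 2 * pi * \<xi> * t)) = 0"
  shows "AE t in lborel. u t = 0"
proof -
  define p where "p t = max 0 (u t)" for t
  define n where "n t = max 0 (- u t)" for t
  have ip: "integrable lborel p" and inn: "integrable lborel n"
    unfolding p_def n_def using u by (auto intro!: integrable_max)
  have p0: "0 \<le> p x" and n0: "0 \<le> n x" for x by (auto simp: p_def n_def)
  have upn: "u t = p t - n t" for t by (auto simp: p_def n_def)
  have iexp_cis: "iexp (t * x) = cis (- 2 * pi * (- t / (2 * pi)) * x)" for t x
    by (simp add: cis_conv_exp)
  have ci: "integrable lborel (\<lambda>x. complex_of_real (q x) * iexp (t * x))"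
    if qi: "integrable lborel q" for q t
  proof (rule Bochner_Integration.integrable_bound)
    show "integrable lborel (\<lambda>x. complex_of_real (q x))" using qi by (rule integrable_of_real)
    have [measurable]: "q \<in> borel_measurable borel" using borel_measurable_integrable[OF qi] by simp
    show "(\<lambda>x. complex_of_real (q x) * iexp (t * x)) \<in> borel_measurable lborel" by measurable
    show "AE x in lborel. norm (complex_of_real (q x) * iexp (t * x)) \<le> norm (complex_of_real (q x))"
      by (simp add: norm_mult)
  qed
  have eqc: "(LINT x|lborel. complex_of_real (p x) * iexp (t * x))
           = (LINT x|lborel. complex_of_real (n x) * iexp (t * x))" for t
  proof -
    have "(LINT x|lborel. complex_of_real (p x) * iexp (t * x))
        - (LINT x|lborel. complex_of_real (n x) * iexp (t * x))
        = (LINT x|lborel. complex_of_real (u x) * iexp (t * x))"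
      by (subst Bochner_Integration.integral_diff[symmetric, OF ci[OF ip] ci[OF inn]])
         (auto intro!: Bochner_Integration.integral_cong simp: upn algebra_simps)
    also have "\<dots> = 0" using ft[of "- t / (2 * pi)"] by (simp only: iexp_cis)
    finally show ?thesis by simp
  qed
  define c where "c = (LINT x|lborel. p x)"
  have cn: "c = (LINT x|lborel. n x)"
  proof -
    have "complex_of_real c = complex_of_real (LINT x|lborel. n x)"
      using eqc[of 0] unfolding c_def by simp
    then show ?thesis by simp
  qed
  have c0: "0 \<le> c" unfolding c_def by (intro integral_nonneg_AE) (simp add: p0)
  show ?thesis
  proof (cases "c = 0")
    case True
    have "AE x in lborel. p x = 0"
      using True unfolding c_def by (subst integral_nonneg_eq_0_iff_AE[symmetric]) (auto simp: p0 ip)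
    moreover have "AE x in lborel. n x = 0"
      using True unfolding cn by (subst integral_nonneg_eq_0_iff_AE[symmetric]) (auto simp: n0 inn)
    ultimately show ?thesis by eventually_elim (simp add: upn)
  next
    case False
    with c0 have cpos: "0 < c" by simp
    have D1: "real_distribution (density lborel (\<lambda>x. ennreal (p x / c)))"
      by (rule density_prob) (use cpos p0 ip in \<open>auto simp: c_def\<close>)
    have D2: "real_distribution (density lborel (\<lambda>x. ennreal (n x / c)))"
      by (rule density_prob) (use cpos n0 cn inn in auto)
    have "char (density lborel (\<lambda>x. ennreal (p x / c))) = char (density lborel (\<lambda>x. ennreal (n x / c)))"
    proof (rule ext)
      fix t
      show "char (density lborel (\<lambda>x. ennreal (p x / c))) t = char (density lborel (\<lambda>x. ennreal (n x / c))) t"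
        unfolding char_density[OF ip p0 cpos] char_density[OF inn n0 cpos] eqc[of t] ..
    qed
    from Levy_uniqueness[OF D1 D2 this]
    have "AE x in lborel. ennreal (p x / c) = ennreal (n x / c)"
    proof (subst sigma_finite_measure.density_unique_iff[OF sigma_finite_lborel, symmetric])
      have [measurable]: "p \<in> borel_measurable borel" "n \<in> borel_measurable borel"
        using borel_measurable_integrable[OF ip] borel_measurable_integrable[OF inn] by auto
      show "(\<lambda>x. ennreal (p x / c)) \<in> borel_measurable lborel"
           "(\<lambda>x. ennreal (n x / c)) \<in> borel_measurable lborel" by measurable
    qed auto
    then show ?thesis
      by eventually_elim (use cpos p0 n0 in \<open>auto simp: upn\<close>)
  qed
qed



lemma ft_translate:
  fixes g :: "real \<Rightarrow> real"
  shows "fourier_transform (\<lambda>t. g (t + b)) \<xi> = cis (2 * pi * \<xi> * b) * fourier_transform g \<xi>"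
proof -
  define G where "G y = complex_of_real (g y) * cis (- 2 * pi * \<xi> * (y - b))" for y
  have "(LINT y|lborel. G y) = \<bar>1::real\<bar> *\<^sub>R (LINT x|lborel. G (b + 1 * x))"
    by (rule lborel_integral_real_affine) simp
  then have "(LINT x|lborel. G (b + x)) = (LINT y|lborel. G y)" by simp
  moreover have "(\<lambda>x. G (b + x)) = (\<lambda>t. complex_of_real (g (t + b)) * cis (- 2 * pi * \<xi> * t))"
    by (auto simp: G_def fun_eq_iff add.commute)
  moreover have "(LINT y|lborel. G y) = (LINT y|lborel. cis (2 * pi * \<xi> * b) * (complex_of_real (g y) * cis (- 2 * pi * \<xi> * y)))"
    by (intro Bochner_Integration.integral_cong) (auto simp: G_def cis_mult algebra_simps)
  ultimately show ?thesis
    unfolding fourier_transform_def by simp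
qed

lemma int_trans:
  fixes P :: "real \<Rightarrow> real"
  assumes "integrable lborel P"
  shows "integrable lborel (\<lambda>t. P (t + c))"
  using lborel_integrable_real_affine[OF assms, of 1 c] by (simp add: add.commute)

lemma int_abs_trans:
  fixes P :: "real \<Rightarrow> real"
  shows "(LINT t|lborel. \<bar>P (t + c)\<bar>) = (LINT t|lborel. \<bar>P t\<bar>)"
  using lborel_integral_real_affine[of 1 "\<lambda>t. \<bar>P t\<bar>" c] by (simp add: add.commute)

lemma ind_int: "integrable lborel (\<lambda>x::real. indicator {0..h} x * (c::real))"
proof -
  have "emeasure lborel {0..h} < \<infinity>"
    by (cases "0 \<le> h") auto
  then show ?thesis by (intro integrable_mult_left integrable_real_indicator) auto
qed

lemma cis_meas[measurable]: "cis \<in> borel_measurable borel"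
  by (intro borel_measurable_continuous_onI continuous_on_cis continuous_on_id)

lemma ft_window:
  fixes P :: "real \<Rightarrow> real"
  assumes iP: "integrable lborel P"
  shows "integrable lborel (\<lambda>t. LINT \<tau>|lborel. indicator {0..h} \<tau> * P (t + \<tau>))" (is ?I)
    and "fourier_transform (\<lambda>t. LINT \<tau>|lborel. indicator {0..h} \<tau> * P (t + \<tau>)) \<xi>
         = (CLINT \<tau>|lborel. indicator {0..h} \<tau> * cis (2 * pi * \<xi> * \<tau>)) * fourier_transform P \<xi>" (is ?F)
proof -
  have [measurable]: "P \<in> borel_measurable borel" using borel_measurable_integrable[OF iP] by simp
  define K where "K \<tau> t = indicator {0..h} \<tau> * P (t + \<tau>)" for \<tau> t :: real
  define H where "H \<tau> t = complex_of_real (K \<tau> t) * cis (- 2 * pi * \<xi> * t)" for \<tau> t :: real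
  have Km[measurable]: "(\<lambda>(\<tau>, t). K \<tau> t) \<in> borel_measurable (lborel \<Otimes>\<^sub>M lborel)"
    unfolding K_def by measurable
  have Hm[measurable]: "(\<lambda>(\<tau>, t). H \<tau> t) \<in> borel_measurable (lborel \<Otimes>\<^sub>M lborel)"
    unfolding H_def K_def by measurable
  have KI: "integrable (lborel \<Otimes>\<^sub>M lborel) (\<lambda>(\<tau>, t). K \<tau> t)"
  proof (rule lborel_pair.Fubini_integrable)
    show "(\<lambda>(\<tau>, t). K \<tau> t) \<in> borel_measurable (lborel \<Otimes>\<^sub>M lborel)" by (rule Km)
    have "(\<lambda>\<tau>. LINT t|lborel. norm (case (\<tau>, t) of (\<tau>, t) \<Rightarrow> K \<tau> t))
        = (\<lambda>\<tau>. indicator {0..h} \<tau> * (LINT t|lborel. \<bar>P t\<bar>))"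
    proof
      fix \<tau>
      have "(LINT t|lborel. norm (case (\<tau>, t) of (\<tau>, t) \<Rightarrow> K \<tau> t))
          = (LINT t|lborel. indicator {0..h} \<tau> * \<bar>P (t + \<tau>)\<bar>)"
        by (simp add: K_def abs_mult)
      also have "\<dots> = indicator {0..h} \<tau> * (LINT t|lborel. \<bar>P t\<bar>)"
        by (simp add: int_abs_trans)
      finally show "(LINT t|lborel. norm (case (\<tau>, t) of (\<tau>, t) \<Rightarrow> K \<tau> t))
          = indicator {0..h} \<tau> * (LINT t|lborel. \<bar>P t\<bar>)" .
    qed
    then show "integrable lborel (\<lambda>\<tau>. LINT t|lborel. norm (case (\<tau>, t) of (\<tau>, t) \<Rightarrow> K \<tau> t))"
      using ind_int by simp
    show "AE \<tau> in lborel. integrable lborel (\<lambda>t. case (\<tau>, t) of (\<tau>, t) \<Rightarrow> K \<tau> t)"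
      unfolding K_def using int_trans[OF iP] by (auto intro!: integrable_mult_right)
  qed
  have HI: "integrable (lborel \<Otimes>\<^sub>M lborel) (\<lambda>(\<tau>, t). H \<tau> t)"
  proof (rule Bochner_Integration.integrable_bound)
    show "integrable (lborel \<Otimes>\<^sub>M lborel) (\<lambda>p. complex_of_real (case p of (\<tau>, t) \<Rightarrow> K \<tau> t))"
      using KI by (rule integrable_of_real)
    show "(\<lambda>(\<tau>, t). H \<tau> t) \<in> borel_measurable (lborel \<Otimes>\<^sub>M lborel)" by (rule Hm)
    show "AE p in lborel \<Otimes>\<^sub>M lborel. norm (case p of (\<tau>, t) \<Rightarrow> H \<tau> t) \<le> norm (complex_of_real (case p of (\<tau>, t) \<Rightarrow> K \<tau> t))"
      by (auto simp: H_def norm_mult)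
  qed
  show ?I using lborel_pair.integrable_snd[OF KI] by (simp add: K_def)
  have "fourier_transform (\<lambda>t. LINT \<tau>|lborel. indicator {0..h} \<tau> * P (t + \<tau>)) \<xi>
      = (CLINT t|lborel. (CLINT \<tau>|lborel. H \<tau> t))"
    unfolding fourier_transform_def
  proof (intro Bochner_Integration.integral_cong refl)
    fix t
    have "(CLINT \<tau>|lborel. H \<tau> t) = (CLINT \<tau>|lborel. complex_of_real (K \<tau> t)) * cis (- 2 * pi * \<xi> * t)"
      unfolding H_def by (rule integral_mult_left_zero)
    then show "complex_of_real (LINT \<tau>|lborel. indicator {0..h} \<tau> * P (t + \<tau>)) * cis (- 2 * pi * \<xi> * t)
        = (CLINT \<tau>|lborel. H \<tau> t)"
      by (simp add: K_def del: of_real_mult)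
  qed
  also have "\<dots> = (CLINT \<tau>|lborel. (CLINT t|lborel. H \<tau> t))"
    using lborel_pair.Fubini_integral[OF HI] .
  also have "\<dots> = (CLINT \<tau>|lborel. indicator {0..h} \<tau> * cis (2 * pi * \<xi> * \<tau>) * fourier_transform P \<xi>)"
  proof (intro Bochner_Integration.integral_cong refl)
    fix \<tau>
    have "(CLINT t|lborel. H \<tau> t) = indicator {0..h} \<tau> * fourier_transform (\<lambda>t. P (t + \<tau>)) \<xi>"
      unfolding H_def K_def fourier_transform_def
      by (simp del: integral_mult_right_zero add: integral_mult_right_zero[symmetric] mult.assoc indicator_def)
    then show "(CLINT t|lborel. H \<tau> t) = indicator {0..h} \<tau> * cis (2 * pi * \<xi> * \<tau>) * fourier_transform P \<xi>"
      by (simp add: ft_translate mult.assoc)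
  qed
  also have "\<dots> = (CLINT \<tau>|lborel. indicator {0..h} \<tau> * cis (2 * pi * \<xi> * \<tau>)) * fourier_transform P \<xi>"
    by simp
  finally show ?F .
qed



definition bk :: "real \<Rightarrow> nat \<Rightarrow> real" where "bk S k = (2 * real k + 1) / (4 * S)"
definition wk :: "real \<Rightarrow> nat \<Rightarrow> real" where "wk S k = (8 * S / pi) * ((-1)^k / (2 * real k + 1)^2)"

lemma abs_wk_sums:
  assumes "0 < S"
  shows "(\<lambda>k. \<bar>wk S k\<bar>) sums (pi * S)"
proof -
  have "(\<lambda>k. (8 * S / pi) * (1 / (2 * real k + 1)^2)) sums ((8 * S / pi) * (pi^2 / 8))"
    by (intro sums_mult odd_squares_sums)
  moreover have "(\<lambda>k. \<bar>wk S k\<bar>) = (\<lambda>k. (8 * S / pi) * (1 / (2 * real k + 1)^2))"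
    using assms by (auto simp: wk_def abs_mult abs_divide fun_eq_iff)
  moreover have "(8 * S / pi) * (pi^2 / 8) = pi * S" by (simp add: power2_eq_square)
  ultimately show ?thesis by simp
qed

lemma wk_sin_sums:
  assumes S: "0 < S" and xi: "\<bar>\<xi>\<bar> < S"
  shows "(\<lambda>k. wk S k * sin (2 * pi * \<xi> * bk S k)) sums (pi * \<xi>)"
proof -
  define x where "x = pi * \<xi> / (2 * S)"
  have "\<bar>x\<bar> < pi / 2"
    using S xi by (auto simp: x_def abs_divide abs_mult field_simps)
  from sums_mult[OF triangle_sums[OF this], of "8 * S / pi"]
  have "(\<lambda>k. (8 * S / pi) * ((-1)^k * sin ((2 * real k + 1) * x) / (2 * real k + 1)^2))
        sums ((8 * S / pi) * (pi / 4 * x))" .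
  moreover have "(8 * S / pi) * (pi / 4 * x) = pi * \<xi>" using S by (simp add: x_def field_simps)
  moreover have "(\<lambda>k. (8 * S / pi) * ((-1)^k * sin ((2 * real k + 1) * x) / (2 * real k + 1)^2))
      = (\<lambda>k. wk S k * sin (2 * pi * \<xi> * bk S k))"
  proof (rule ext)
    fix k
    have arg: "(2 * real k + 1) * x = 2 * pi * \<xi> * bk S k"
      using S by (simp add: x_def bk_def field_simps)
    show "(8 * S / pi) * ((-1)^k * sin ((2 * real k + 1) * x) / (2 * real k + 1)^2)
      = wk S k * sin (2 * pi * \<xi> * bk S k)"
      unfolding arg wk_def by simp
  qed
  ultimately show ?thesis by simp
qed

definition Mu :: "real \<Rightarrow> real \<Rightarrow> complex" where
  "Mu S \<xi> = (\<Sum>k. complex_of_real (wk S k) * (cis (2 * pi * \<xi> * bk S k) - cis (- (2 * pi * \<xi> * bk S k))))"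

lemma cis_diff_sin: "cis t - cis (- t) = 2 * \<i> * complex_of_real (sin t)"
  by (simp add: complex_eq_iff cis.sel)

lemma Mu_eval:
  assumes S: "0 < S" and xi: "\<bar>\<xi>\<bar> < S"
  shows "Mu S \<xi> = 2 * pi * \<i> * complex_of_real \<xi>"
proof -
  have "(\<lambda>k. complex_of_real (wk S k * sin (2 * pi * \<xi> * bk S k))) sums complex_of_real (pi * \<xi>)"
    using wk_sin_sums[OF S xi] by (rule sums_of_real)
  from sums_mult[OF this, of "2 * \<i>"]
  have "(\<lambda>k. complex_of_real (wk S k) * (cis (2 * pi * \<xi> * bk S k) - cis (- (2 * pi * \<xi> * bk S k))))
        sums (2 * \<i> * complex_of_real (pi * \<xi>))"
    by (simp add: cis_diff_sin mult_ac)
  then show ?thesis unfolding Mu_def by (simp add: sums_iff mult_ac)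
qed

definition Pf :: "real \<Rightarrow> (real \<Rightarrow> real) \<Rightarrow> real \<Rightarrow> real" where
  "Pf S f t = (\<Sum>k. wk S k * (f (t + bk S k) - f (t - bk S k)))"

lemma Pf_term_bound:
  assumes B: "\<And>x. \<bar>f x\<bar> \<le> B"
  shows "\<bar>wk S k * (f (t + bk S k) - f (t - bk S k))\<bar> \<le> \<bar>wk S k\<bar> * (2 * B)"
proof -
  have "\<bar>f (t + bk S k) - f (t - bk S k)\<bar> \<le> 2 * B"
    using B[of "t + bk S k"] B[of "t - bk S k"] by linarith
  then show ?thesis by (simp add: abs_mult mult_left_mono)
qed

lemma Pf_summable:
  assumes S: "0 < S" and B: "\<And>x. \<bar>f x\<bar> \<le> B"
  shows "summable (\<lambda>k. \<bar>wk S k * (f (t + bk S k) - f (t - bk S k))\<bar>)"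
proof (rule summable_comparison_test')
  show "summable (\<lambda>k. \<bar>wk S k\<bar> * (2 * B))"
    using abs_wk_sums[OF S] by (intro summable_mult2) (simp add: sums_iff)
  show "norm \<bar>wk S k * (f (t + bk S k) - f (t - bk S k))\<bar> \<le> \<bar>wk S k\<bar> * (2 * B)" for k
    using Pf_term_bound[where f=f, OF B] by simp
qed

lemma Pf_bound:
  assumes S: "0 < S" and B: "\<And>x. \<bar>f x\<bar> \<le> B"
  shows "\<bar>Pf S f t\<bar> \<le> 2 * pi * S * B"
proof -
  have s1: "summable (\<lambda>k. \<bar>wk S k * (f (t + bk S k) - f (t - bk S k))\<bar>)"
    by (rule Pf_summable[where f=f, OF S B])
  have s2: "(\<lambda>k. \<bar>wk S k\<bar> * (2 * B)) sums (pi * S * (2 * B))"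
    using abs_wk_sums[OF S] by (rule sums_mult2)
  have "\<bar>Pf S f t\<bar> \<le> (\<Sum>k. \<bar>wk S k * (f (t + bk S k) - f (t - bk S k))\<bar>)"
    unfolding Pf_def by (rule summable_rabs[OF s1])
  also have "\<dots> \<le> (\<Sum>k. \<bar>wk S k\<bar> * (2 * B))"
    using s1 s2 Pf_term_bound[where f=f, OF B] by (intro suminf_le) (auto simp: sums_iff)
  also have "\<dots> = 2 * pi * S * B" using s2 by (simp add: sums_iff)
  finally show ?thesis .
qed

lemma ft_integrable:
  fixes g :: "real \<Rightarrow> real"
  assumes gi: "integrable lborel g"
  shows "integrable lborel (\<lambda>t. complex_of_real (g t) * cis (a * t))"
proof (rule Bochner_Integration.integrable_bound)
  show "integrable lborel (\<lambda>x. complex_of_real (g x))" using gi by (rule integrable_of_real)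
  have [measurable]: "g \<in> borel_measurable borel" using borel_measurable_integrable[OF gi] by simp
  show "(\<lambda>t. complex_of_real (g t) * cis (a * t)) \<in> borel_measurable lborel" by measurable
  show "AE x in lborel. norm (complex_of_real (g x) * cis (a * x)) \<le> norm (complex_of_real (g x))"
    by (simp add: norm_mult)
qed

lemma Pf_term_int:
  assumes fi: "integrable lborel f"
  shows "integrable lborel (\<lambda>t. wk S k * (f (t + bk S k) - f (t - bk S k)))"
proof -
  have "integrable lborel (\<lambda>t. f (t - bk S k))" using int_trans[OF fi, where c="- bk S k"] by simp
  then show ?thesis using int_trans[OF fi, where c="bk S k"]
    by (intro integrable_mult_right Bochner_Integration.integrable_diff) auto
qed

lemma Pf_term_L1:
  assumes fi: "integrable lborel f"
  shows "(LINT t|lborel. \<bar>wk S k * (f (t + bk S k) - f (t - bk S k))\<bar>) \<le> \<bar>wk S k\<bar> * (2 * (LINT t|lborel. \<bar>f t\<bar>))"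
proof -
  have i1: "integrable lborel (\<lambda>t. f (t + bk S k))" and i2: "integrable lborel (\<lambda>t. f (t + - bk S k))"
    using int_trans[OF fi, where c="bk S k"] int_trans[OF fi, where c="- bk S k"] by auto
  have "(LINT t|lborel. \<bar>wk S k * (f (t + bk S k) - f (t - bk S k))\<bar>)
      \<le> (LINT t|lborel. \<bar>wk S k\<bar> * (\<bar>f (t + bk S k)\<bar> + \<bar>f (t + - bk S k)\<bar>))"
    using i1 i2 Pf_term_int[OF fi, of S k]
    by (intro integral_mono) (auto simp: abs_mult intro!: mult_left_mono)
  also have "\<dots> = \<bar>wk S k\<bar> * ((LINT t|lborel. \<bar>f (t + bk S k)\<bar>) + (LINT t|lborel. \<bar>f (t + - bk S k)\<bar>))"
    using i1 i2 by (simp add: Bochner_Integration.integral_add)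
  also have "\<dots> = \<bar>wk S k\<bar> * (2 * (LINT t|lborel. \<bar>f t\<bar>))"
    by (simp only: int_abs_trans) simp
  finally show ?thesis .
qed

lemma Pf_L1_summable:
  assumes S: "0 < S" and fi: "integrable lborel f"
  shows "summable (\<lambda>k. LINT t|lborel. norm (wk S k * (f (t + bk S k) - f (t - bk S k))))"
proof (rule summable_comparison_test')
  show "summable (\<lambda>k. \<bar>wk S k\<bar> * (2 * (LINT t|lborel. \<bar>f t\<bar>)))"
    using abs_wk_sums[OF S] by (intro summable_mult2) (simp add: sums_iff)
  show "norm (LINT t|lborel. norm (wk S k * (f (t + bk S k) - f (t - bk S k))))
      \<le> \<bar>wk S k\<bar> * (2 * (LINT t|lborel. \<bar>f t\<bar>))" for k
    using Pf_term_L1[OF fi, of S k] by (simp add: integral_nonneg_AE)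
qed

lemma Pf_integrable:
  assumes S: "0 < S" and fi: "integrable lborel f" and B: "\<And>x. \<bar>f x\<bar> \<le> B"
  shows "integrable lborel (Pf S f)"
proof -
  have "integrable lborel (\<lambda>t. \<Sum>k. wk S k * (f (t + bk S k) - f (t - bk S k)))"
  proof (rule integrable_suminf)
    show "integrable lborel (\<lambda>t. wk S k * (f (t + bk S k) - f (t - bk S k)))" for k
      by (rule Pf_term_int[OF fi])
    show "AE t in lborel. summable (\<lambda>k. norm (wk S k * (f (t + bk S k) - f (t - bk S k))))"
      using Pf_summable[where f=f, OF S B] by simp
    show "summable (\<lambda>k. LINT t|lborel. norm (wk S k * (f (t + bk S k) - f (t - bk S k))))"
      by (rule Pf_L1_summable[OF S fi])
  qed
  then show ?thesis unfolding Pf_def[abs_def] .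
qed

lemma Mu_summable:
  assumes S: "0 < S"
  shows "summable (\<lambda>k. complex_of_real (wk S k) * (cis (2 * pi * \<xi> * bk S k) - cis (- (2 * pi * \<xi> * bk S k))))"
proof (rule summable_comparison_test')
  show "summable (\<lambda>k. \<bar>wk S k\<bar> * 2)"
    using abs_wk_sums[OF S] by (intro summable_mult2) (simp add: sums_iff)
  show "norm (complex_of_real (wk S k) * (cis (2 * pi * \<xi> * bk S k) - cis (- (2 * pi * \<xi> * bk S k))))
      \<le> \<bar>wk S k\<bar> * 2" for k
  proof -
    have "norm (cis (2 * pi * \<xi> * bk S k) - cis (- (2 * pi * \<xi> * bk S k))) \<le> 2"
      using norm_triangle_ineq4[of "cis (2 * pi * \<xi> * bk S k)" "cis (- (2 * pi * \<xi> * bk S k))"] by simp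
    then show ?thesis by (simp add: norm_mult mult_left_mono)
  qed
qed

lemma Pf_ft:
  assumes S: "0 < S" and fi: "integrable lborel f" and B: "\<And>x. \<bar>f x\<bar> \<le> B"
  shows "fourier_transform (Pf S f) \<xi> = Mu S \<xi> * fourier_transform f \<xi>"
proof -
  define g where "g k t = wk S k * (f (t + bk S k) - f (t - bk S k))" for k t
  define \<phi> where "\<phi> k t = complex_of_real (g k t) * cis (- 2 * pi * \<xi> * t)" for k t
  have gi: "integrable lborel (g k)" for k unfolding g_def[abs_def] by (rule Pf_term_int[OF fi])
  have gs: "summable (\<lambda>k. \<bar>g k t\<bar>)" for t unfolding g_def by (rule Pf_summable[where f=f, OF S B])
  have \<phi>i: "integrable lborel (\<phi> k)" for k
    unfolding \<phi>_def[abs_def] by (rule ft_integrable[OF gi])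
  have nphi: "norm (\<phi> k t) = \<bar>g k t\<bar>" for k t
    unfolding \<phi>_def norm_mult norm_cis norm_of_real by simp
  have sumphi: "(\<Sum>k. \<phi> k t) = complex_of_real (Pf S f t) * cis (- 2 * pi * \<xi> * t)" for t
  proof -
    have sg: "summable (\<lambda>k. g k t)" using gs[of t] by (rule summable_rabs_cancel)
    have "(\<Sum>k. \<phi> k t) = (\<Sum>k. complex_of_real (g k t)) * cis (- 2 * pi * \<xi> * t)"
      unfolding \<phi>_def by (rule suminf_mult2[symmetric]) (rule summable_of_real[OF sg])
    also have "(\<Sum>k. complex_of_real (g k t)) = complex_of_real (\<Sum>k. g k t)"
      by (rule suminf_of_real[OF sg, symmetric])
    finally show ?thesis by (simp add: Pf_def g_def)
  qed
  have intphi: "(LINT t|lborel. \<phi> k t) = complex_of_real (wk S k) * (cis (2 * pi * \<xi> * bk S k) - cis (- (2 * pi * \<xi> * bk S k))) * fourier_transform f \<xi>" for k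
  proof -
    have i1: "integrable lborel (\<lambda>t. complex_of_real (f (t + bk S k)) * cis (- 2 * pi * \<xi> * t))"
      using ft_integrable[OF int_trans[OF fi, where c="bk S k"]] by (simp only:)
    have i2: "integrable lborel (\<lambda>t. complex_of_real (f (t + - bk S k)) * cis (- 2 * pi * \<xi> * t))"
      using ft_integrable[OF int_trans[OF fi, where c="- bk S k"]] by (simp only:)
    have "(LINT t|lborel. \<phi> k t) = complex_of_real (wk S k) *
        ((LINT t|lborel. complex_of_real (f (t + bk S k)) * cis (- 2 * pi * \<xi> * t))
        - (LINT t|lborel. complex_of_real (f (t + - bk S k)) * cis (- 2 * pi * \<xi> * t)))"
      unfolding Bochner_Integration.integral_diff[OF i1 i2, symmetric] integral_mult_right_zero[symmetric]
      by (intro Bochner_Integration.integral_cong) (auto simp: \<phi>_def g_def algebra_simps)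
    also have "\<dots> = complex_of_real (wk S k) * (fourier_transform (\<lambda>t. f (t + bk S k)) \<xi>
        - fourier_transform (\<lambda>t. f (t + - bk S k)) \<xi>)"
      unfolding fourier_transform_def ..
    also have "\<dots> = complex_of_real (wk S k) * (cis (2 * pi * \<xi> * bk S k) - cis (- (2 * pi * \<xi> * bk S k))) * fourier_transform f \<xi>"
      unfolding ft_translate by (simp add: algebra_simps)
    finally show ?thesis .
  qed
  have "fourier_transform (Pf S f) \<xi> = (LINT t|lborel. (\<Sum>k. \<phi> k t))"
    unfolding fourier_transform_def sumphi ..
  also have "\<dots> = (\<Sum>k. LINT t|lborel. \<phi> k t)"
  proof (rule integral_suminf)
    show "integrable lborel (\<phi> k)" for k by (rule \<phi>i)
    show "AE t in lborel. summable (\<lambda>k. norm (\<phi> k t))"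
      using gs unfolding nphi by simp
    show "summable (\<lambda>k. LINT t|lborel. norm (\<phi> k t))"
      using Pf_L1_summable[OF S fi] unfolding nphi g_def by simp
  qed
  also have "\<dots> = (\<Sum>k. complex_of_real (wk S k) * (cis (2 * pi * \<xi> * bk S k) - cis (- (2 * pi * \<xi> * bk S k))) * fourier_transform f \<xi>)"
    unfolding intphi ..
  also have "\<dots> = Mu S \<xi> * fourier_transform f \<xi>"
    unfolding Mu_def by (rule suminf_mult2[symmetric, OF Mu_summable[OF S]])
  finally show ?thesis .
qed

lemma window_ft:
  assumes h: "0 \<le> h"
  shows "(2 * pi * \<i> * complex_of_real \<xi>) * (CLINT \<tau>|lborel. indicator {0..h} \<tau> * cis (2 * pi * \<xi> * \<tau>))
       = cis (2 * pi * \<xi> * h) - 1"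
proof (cases "\<xi> = 0")
  case True then show ?thesis by simp
next
  case False
  define c where "c = complex_of_real (2 * pi * \<xi>)"
  have c0: "c \<noteq> 0" using False by (simp add: c_def)
  define g where "g z = exp (\<i> * c * z) / (\<i> * c)" for z
  have cis_eq: "cis (2 * pi * \<xi> * \<tau>) = exp (\<i> * c * complex_of_real \<tau>)" for \<tau>
    by (simp add: cis_conv_exp c_def mult_ac)
  have "(CLINT \<tau>|lborel. indicator {0..h} \<tau> * cis (2 * pi * \<xi> * \<tau>))
      = (CLBINT \<tau>=ereal 0..ereal h. cis (2 * pi * \<xi> * \<tau>))"
    unfolding interval_integral_Icc[OF h] set_lebesgue_integral_def
    by (intro Bochner_Integration.integral_cong) (auto simp: indicator_def)
  also have "\<dots> = g (complex_of_real h) - g (complex_of_real 0)"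
  proof (rule interval_integral_FTC_finite)
    show "continuous_on {min 0 h..max 0 h} (\<lambda>\<tau>. cis (2 * pi * \<xi> * \<tau>))"
      by (intro continuous_intros)
    fix x
    have "(g has_field_derivative exp (\<i> * c * complex_of_real x)) (at (complex_of_real x))"
      unfolding g_def using c0 by (auto intro!: derivative_eq_intros simp: field_simps)
    from has_vector_derivative_real_field[OF this]
    show "((\<lambda>\<tau>. g (complex_of_real \<tau>)) has_vector_derivative cis (2 * pi * \<xi> * x)) (at x within {min 0 h..max 0 h})"
      by (simp add: cis_eq)
  qed
  finally have "(CLINT \<tau>|lborel. indicator {0..h} \<tau> * cis (2 * pi * \<xi> * \<tau>)) = g (complex_of_real h) - g 0"
    by simp
  moreover have "(2 * pi * \<i> * complex_of_real \<xi>) = \<i> * c" by (simp add: c_def mult_ac)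
  ultimately show ?thesis
    using c0 unfolding cis_eq[of h] by (simp add: g_def field_simps)
qed



lemma bound_integrable:
  fixes f :: "real \<Rightarrow> real"
  assumes c: "continuous_on UNIV f" and b: "\<And>t. \<bar>f t\<bar> \<le> A / (1 + t\<^sup>2)"
  shows "integrable lborel f"
proof -
  have "integrable lborel (\<lambda>x::real. inverse (1 + x^2))"
    using integrable_inverse_1_plus_square unfolding set_integrable_def by (simp add: einterval_def)
  then have i: "integrable lborel (\<lambda>x. A * inverse (1 + x^2))" by (rule integrable_mult_right)
  show ?thesis
  proof (rule Bochner_Integration.integrable_bound[OF i])
    show "f \<in> borel_measurable lborel" using c by (auto intro: borel_measurable_continuous_onI)
    show "AE x in lborel. norm (f x) \<le> norm (A * inverse (1 + x\<^sup>2))"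
      using b by (auto simp: divide_inverse intro: order_trans[OF _ abs_ge_self])
  qed
qed

lemma AE_cont_all:
  fixes g :: "real \<Rightarrow> real"
  assumes c: "continuous_on UNIV g" and ae: "AE t in lborel. g t \<le> C"
  shows "g t \<le> C"
proof (rule ccontr)
  assume "\<not> g t \<le> C"
  define U where "U = {x. C < g x}"
  have "open U" unfolding U_def by (intro open_Collect_less continuous_intros c)
  moreover have "t \<in> U" using \<open>\<not> g t \<le> C\<close> by (simp add: U_def)
  ultimately obtain e where e: "0 < e" "ball t e \<subseteq> U" by (meson open_contains_ball)
  from ae obtain N where N: "{x \<in> space lborel. \<not> g x \<le> C} \<subseteq> N" "N \<in> null_sets lborel"
    using ae unfolding eventually_ae_filter by blast
  have "ball t e \<subseteq> N" using e(2) N(1) by (force simp: U_def)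
  then have "emeasure lborel (ball t e) \<le> emeasure lborel N"
    using N(2) by (intro emeasure_mono) auto
  also have "\<dots> = 0" using N(2) by auto
  finally have "emeasure lborel (ball t e) = 0" by simp
  moreover have "emeasure lborel (ball t e) = ennreal (2 * e)"
    using e(1) by (simp add: ball_eq_greaterThanLessThan)
  ultimately show False using e(1) by simp
qed

lemma ft_diff:
  fixes a b :: "real \<Rightarrow> real"
  assumes "integrable lborel a" "integrable lborel b"
  shows "fourier_transform (\<lambda>t. a t - b t) \<xi> = fourier_transform a \<xi> - fourier_transform b \<xi>"
  unfolding fourier_transform_def
  by (subst Bochner_Integration.integral_diff[symmetric, OF ft_integrable[OF assms(1)] ft_integrable[OF assms(2)]])
     (auto simp: algebra_simps intro!: Bochner_Integration.integral_cong)

lemma R_bound: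
  fixes P :: "real \<Rightarrow> real"
  assumes iP: "integrable lborel P" and Pb: "\<And>x. \<bar>P x\<bar> \<le> M" and h: "0 \<le> h"
  shows "\<bar>LINT \<tau>|lborel. indicator {0..h} \<tau> * P (t + \<tau>)\<bar> \<le> h * M"
proof -
  have i1: "integrable lborel (\<lambda>\<tau>. indicator {0..h} \<tau> * P (t + \<tau>))"
    using integrable_real_mult_indicator[OF _ int_trans[OF iP, where c=t], of "{0..h}"]
    by (simp add: mult.commute add.commute)
  have "\<bar>LINT \<tau>|lborel. indicator {0..h} \<tau> * P (t + \<tau>)\<bar> \<le> (LINT \<tau>|lborel. indicator {0..h} \<tau> * M)"
    by (rule integral_abs_bound_integral[OF i1 ind_int])
       (auto simp: indicator_def Pb)
  also have "\<dots> = h * M"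
    using h by (simp add: measure_def)
  finally show ?thesis .
qed

lemma lip_step:
  fixes f :: "real \<Rightarrow> real"
  assumes sig: "\<sigma> > 0" and cf: "continuous_on UNIV f" and bl: "bandlimited \<sigma> f"
    and fb: "\<And>t. \<bar>f t\<bar> \<le> A / (1 + t\<^sup>2)" and ss: "\<sigma> < \<sigma>'" and h: "0 \<le> h"
  shows "\<bar>f (t + h) - f t\<bar> \<le> h * (\<sigma>' * A)"
proof -
  define S where "S = \<sigma>' / (2 * pi)"
  have S0: "0 < S" using sig ss by (simp add: S_def)
  have sS: "\<sigma> / (2 * pi) < S" using ss by (simp add: S_def divide_strict_right_mono)
  have A0: "0 \<le> A" using fb[of 0] by simp
  have B: "\<bar>f x\<bar> \<le> A" for x
  proof -
    have "A / (1 + x\<^sup>2) \<le> A / 1"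
      by (rule divide_left_mono) (use A0 in \<open>auto intro: add_pos_nonneg\<close>)
    then show ?thesis using fb[of x] by simp
  qed
  have fi: "integrable lborel f" by (rule bound_integrable[OF cf fb])
  define P where "P = Pf S f"
  have Pi: "integrable lborel P" unfolding P_def by (rule Pf_integrable[OF S0 fi B])
  have Pb: "\<bar>P x\<bar> \<le> \<sigma>' * A" for x
    using Pf_bound[where f=f, OF S0 B, of x] by (simp add: P_def S_def)
  define R where "R t = (LINT \<tau>|lborel. indicator {0..h} \<tau> * P (t + \<tau>))" for t
  have Ri: "integrable lborel R" unfolding R_def by (rule ft_window(1)[OF Pi])
  have RF: "fourier_transform R \<xi> = (CLINT \<tau>|lborel. indicator {0..h} \<tau> * cis (2 * pi * \<xi> * \<tau>)) * (Mu S \<xi> * fourier_transform f \<xi>)" for \<xi>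
    unfolding R_def by (subst ft_window(2)[OF Pi]) (simp only: P_def Pf_ft[OF S0 fi B])
  define D where "D t = f (t + h) - f t" for t
  have Di: "integrable lborel D" unfolding D_def
    using int_trans[OF fi, where c=h] fi by (intro Bochner_Integration.integrable_diff)
  have DF: "fourier_transform D \<xi> = (cis (2 * pi * \<xi> * h) - 1) * fourier_transform f \<xi>" for \<xi>
    unfolding D_def ft_diff[OF int_trans[OF fi, where c=h] fi] ft_translate by (simp add: algebra_simps)
  have uF: "fourier_transform (\<lambda>t. D t - R t) \<xi> = 0" for \<xi>
  proof (cases "\<bar>\<xi>\<bar> > \<sigma> / (2 * pi)")
    case True
    then have "fourier_transform f \<xi> = 0" using bl by (simp add: bandlimited_def)
    then show ?thesis unfolding ft_diff[OF Di Ri] DF RF by simp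
  next
    case False
    then have "\<bar>\<xi>\<bar> < S" using sS by simp
    then have "Mu S \<xi> = 2 * pi * \<i> * complex_of_real \<xi>" by (rule Mu_eval[OF S0])
    then have "fourier_transform R \<xi> = (cis (2 * pi * \<xi> * h) - 1) * fourier_transform f \<xi>"
      unfolding RF using window_ft[OF h, of \<xi>] by (simp add: mult_ac)
    then show ?thesis unfolding ft_diff[OF Di Ri] DF by simp
  qed
  have "AE t in lborel. D t - R t = 0"
    by (rule ft_uniqueness) (use Di Ri uF in \<open>auto simp: fourier_transform_def\<close>)
  then have ae: "AE t in lborel. \<bar>f (t + h) - f t\<bar> \<le> h * (\<sigma>' * A)"
  proof eventually_elim
    case (elim t)
    then have "\<bar>f (t + h) - f t\<bar> = \<bar>R t\<bar>" by (simp add: D_def)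
    also have "\<dots> \<le> h * (\<sigma>' * A)" unfolding R_def by (rule R_bound[OF Pi Pb h])
    finally show ?case .
  qed
  show ?thesis
    by (rule AE_cont_all[OF _ ae]) (intro continuous_intros continuous_on_compose2[OF cf] cf; simp)
qed



lemma bernstein_lip:
  fixes f :: "real \<Rightarrow> real"
  assumes "\<sigma> > 0" "continuous_on UNIV f" "bandlimited \<sigma> f"
    "\<And>t. \<bar>f t\<bar> \<le> A / (1 + t\<^sup>2)" "\<sigma> < \<sigma>'"
  shows "\<bar>f y - f x\<bar> \<le> \<sigma>' * A * \<bar>y - x\<bar>"
proof (cases "x \<le> y")
  case True
  have "\<bar>f (x + (y - x)) - f x\<bar> \<le> (y - x) * (\<sigma>' * A)"
    by (rule lip_step[OF assms]) (use True in simp)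
  then show ?thesis using True by (simp add: mult_ac)
next
  case False
  have "\<bar>f (y + (x - y)) - f y\<bar> \<le> (x - y) * (\<sigma>' * A)"
    by (rule lip_step[OF assms]) (use False in simp)
  then show ?thesis using False by (simp add: mult_ac abs_minus_commute)
qed

lemma g_props:
  fixes f :: "real \<Rightarrow> real"
  assumes cont: "continuous_on UNIV f" and lip: "\<And>x y. \<bar>f y - f x\<bar> \<le> L * \<bar>y - x\<bar>"
    and L: "L < \<alpha>" and bnd: "\<And>t. \<bar>f t\<bar> \<le> A"
  shows "strict_mono (\<lambda>t. \<alpha> * t + f t)" "continuous_on UNIV (\<lambda>t. \<alpha> * t + f t)"
    "surj (\<lambda>t. \<alpha> * t + f t)"
proof -
  show sm: "strict_mono (\<lambda>t. \<alpha> * t + f t)"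
  proof (rule strict_monoI)
    fix x y :: real assume "x < y"
    have "f x - f y \<le> L * (y - x)" using lip[of y x] \<open>x < y\<close> by auto
    moreover have "L * (y - x) < \<alpha> * (y - x)" using L \<open>x < y\<close> by simp
    ultimately show "\<alpha> * x + f x < \<alpha> * y + f y" by (simp add: algebra_simps)
  qed
  show c: "continuous_on UNIV (\<lambda>t. \<alpha> * t + f t)"
    by (intro continuous_intros cont)
  have A0: "0 \<le> A" using bnd[of 0] by simp
  have a0: "0 < \<alpha>"
  proof -
    have "0 \<le> L" using lip[of 1 0] abs_ge_zero[of "f 1 - f 0"] by simp
    with L show ?thesis by simp
  qed
  show "surj (\<lambda>t. \<alpha> * t + f t)"
  unfolding surj_def
  proof
    fix u
    have "\<exists>x. (u - A)/\<alpha> \<le> x \<and> x \<le> (u + A)/\<alpha> \<and> \<alpha> * x + f x = u"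
    proof (rule IVT')
      show "\<alpha> * ((u - A) / \<alpha>) + f ((u - A) / \<alpha>) \<le> u"
        using a0 bnd[of "(u - A) / \<alpha>"] by simp
      show "u \<le> \<alpha> * ((u + A) / \<alpha>) + f ((u + A) / \<alpha>)"
        using a0 bnd[of "(u + A) / \<alpha>"] by simp
      show "(u - A) / \<alpha> \<le> (u + A) / \<alpha>" using a0 A0 by (simp add: divide_right_mono)
      show "continuous_on {(u - A) / \<alpha>..(u + A) / \<alpha>} (\<lambda>t. \<alpha> * t + f t)"
        using c by (rule continuous_on_subset) simp
    qed
    then show "\<exists>x. u = \<alpha> * x + f x" by (metis)
  qed
qed

theorem mainTheorem9:
  fixes \<sigma> A \<alpha> :: real and f1 f2 :: "real \<Rightarrow> real"
  assumes "\<sigma> > 0" and "A > 0" and "\<alpha> > A * \<sigma>"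
    and "continuous_on UNIV f1" and "continuous_on UNIV f2"
    and "bandlimited \<sigma> f1" and "bandlimited \<sigma> f2"
    and "\<And>t. \<bar>f1 t\<bar> \<le> A / (1 + t\<^sup>2)"
    and "\<And>t. \<bar>f2 t\<bar> \<le> A / (1 + t\<^sup>2)"
  shows "L1_norm (\<lambda>u. (inv (\<lambda>t. \<alpha> * t + f1 t) u - u / \<alpha>)
                     - (inv (\<lambda>t. \<alpha> * t + f2 t) u - u / \<alpha>))
         = L1_norm (\<lambda>t. f1 t - f2 t)"
proof -
  define s where "s = (\<sigma> + \<alpha> / A) / 2"
  have ss: "\<sigma> < s" and sA: "s * A < \<alpha>"
    using assms(2,3) by (auto simp: s_def field_simps)
  have bnd: "A / (1 + t\<^sup>2) \<le> A" for t
  proof -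
    have "A / (1 + t\<^sup>2) \<le> A / 1"
      by (rule divide_left_mono) (use assms(2) in \<open>auto intro: add_pos_nonneg\<close>)
    then show ?thesis by simp
  qed
  have l1: "\<bar>f1 y - f1 x\<bar> \<le> (s * A) * \<bar>y - x\<bar>" for x y
    using bernstein_lip[OF assms(1) assms(4) assms(6) assms(8) ss] by (simp add: mult.assoc)
  have l2: "\<bar>f2 y - f2 x\<bar> \<le> (s * A) * \<bar>y - x\<bar>" for x y
    using bernstein_lip[OF assms(1) assms(5) assms(7) assms(9) ss] by (simp add: mult.assoc)
  have b1: "\<bar>f1 t\<bar> \<le> A" for t using assms(8)[of t] bnd[of t] by linarith
  have b2: "\<bar>f2 t\<bar> \<le> A" for t using assms(9)[of t] bnd[of t] by linarith
  note G1 = g_props[OF assms(4) l1 sA b1]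
  note G2 = g_props[OF assms(5) l2 sA b2]
  have "L1_norm (\<lambda>u. (inv (\<lambda>t. \<alpha> * t + f1 t) u - u / \<alpha>)
                     - (inv (\<lambda>t. \<alpha> * t + f2 t) u - u / \<alpha>))
      = (\<integral>\<^sup>+u. ennreal \<bar>inv (\<lambda>t. \<alpha> * t + f1 t) u - inv (\<lambda>t. \<alpha> * t + f2 t) u\<bar> \<partial>lborel)"
    unfolding L1_norm_def by simp
  also have "\<dots> = (\<integral>\<^sup>+t. ennreal \<bar>(\<alpha> * t + f1 t) - (\<alpha> * t + f2 t)\<bar> \<partial>lborel)"
    by (rule area[OF G1(1) G2(1) G1(2) G2(2) G1(3) G2(3)])
  also have "\<dots> = L1_norm (\<lambda>t. f1 t - f2 t)"
    unfolding L1_norm_def by simp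
  finally show ?thesis .
qed
end
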